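(* Let $G$ be a group with identity $e$, $A$ a finite set with $|A|\ge2$, $S\subseteq G$ finite with $e\in S$ and $|S|\ge2$. Suppose $(\mathcal P,f)$ generates a local map $\mu:A^S\to A$ and $|\mathcal P|$ is not a multiple of $|A|$. Then $\mathrm{mms}(\mu)=S$.
   Context: $A^S$ is the set of functions $S\to A$. A local map $\mu:A^S\to A$ defines the cellular automaton $\tau:A^G\to A^G$, $\tau(x)(g)=\mu((g^{-1}\cdot x)|_S)$, where $(g\cdot x)(h)=x(g^{-1}h)$. A finite $T\subseteq G$ is a memory set of $\tau$ if some local map $A^T\to A$ defines $\tau$; $\mathrm{mms}(\mu)$ is the intersection of all memory sets of the cellular automaton defined by $\mu$. The pair $(\mathcal P,f)$ generates $\mu$ if $\mathcal P=\{z\in A^S:\mu(z)\neq z(e)\}$ and $f:\mathcal P\to A$ is the restriction of $\mu$ to $\mathcal P$. *)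

theory Defs
  imports Main
begin

text \<open>The group G is a type of class group_add (written additively; not assumed
commutative): identity 0, product g + h, inverse - g.
A pattern z \<in> A^S is represented as a function 'g \<Rightarrow> 'a that is undefined
(the fixed value undefined) outside S.\<close>

definition patterns :: "'g set \<Rightarrow> ('g \<Rightarrow> 'a) set" where
  "patterns S = {z. \<forall>g. g \<notin> S \<longrightarrow> z g = undefined}"

definition restr :: "'g set \<Rightarrow> ('g \<Rightarrow> 'a) \<Rightarrow> ('g \<Rightarrow> 'a)" where
  "restr S x = (\<lambda>g. if g \<in> S then x g else undefined)"

definition shift :: "'g::group_add \<Rightarrow> ('g \<Rightarrow> 'a) \<Rightarrow> ('g \<Rightarrow> 'a)" where
  "shift g x = (\<lambda>h. x (- g + h))"

definition ca :: "'g::group_add set \<Rightarrow> (('g \<Rightarrow> 'a) \<Rightarrow> 'a) \<Rightarrow> ('g \<Rightarrow> 'a) \<Rightarrow> ('g \<Rightarrow> 'a)" where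
  "ca S mu x = (\<lambda>g. mu (restr S (shift (- g) x)))"

definition memory_set :: "(('g::group_add \<Rightarrow> 'a) \<Rightarrow> ('g \<Rightarrow> 'a)) \<Rightarrow> 'g set \<Rightarrow> bool" where
  "memory_set tau T \<longleftrightarrow> finite T \<and> (\<exists>nu. tau = ca T nu)"

definition mms :: "'g::group_add set \<Rightarrow> (('g \<Rightarrow> 'a) \<Rightarrow> 'a) \<Rightarrow> 'g set" where
  "mms S mu = \<Inter> {T. memory_set (ca S mu) T}"

definition generates :: "'g::group_add set \<Rightarrow> ('g \<Rightarrow> 'a) set \<Rightarrow> (('g \<Rightarrow> 'a) \<Rightarrow> 'a)
    \<Rightarrow> (('g \<Rightarrow> 'a) \<Rightarrow> 'a) \<Rightarrow> bool" where
  "generates S P f mu \<longleftrightarrow> P = {z \<in> patterns S. mu z \<noteq> z 0} \<and> (\<forall>z\<in>P. f z = mu z)"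

end

theory Submission
  imports Defs "HOL-Library.FuncSet"
begin

lemma patterns_PiE: "patterns S = (S \<rightarrow>\<^sub>E (UNIV::'a set))"
  by (auto simp: patterns_def PiE_def extensional_def)

lemma restr_pat: "z \<in> patterns S \<Longrightarrow> restr S z = z"
  by (auto simp: restr_def patterns_def)

lemma shift0: "shift (0::'g::group_add) x = x"
  by (simp add: shift_def)

lemma invariance:
  assumes "ca S mu = ca T nu" "s \<notin> T" "s \<in> S" "z \<in> patterns S"
  shows "mu (z(s:=a)) = mu z"
proof -
  have key: "mu (restr S x) = nu (restr T x)" for x
    using fun_cong[OF assms(1), of x] unfolding ca_def
    by (metis minus_zero shift0)
  have z2: "z(s:=a) \<in> patterns S" using assms(3,4) by (auto simp: patterns_def)
  have "restr T (z(s:=a)) = restr T z" using assms(2) by (auto simp: restr_def)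
  then show ?thesis using key[of z] key[of "z(s:=a)"] restr_pat[OF assms(4)] restr_pat[OF z2]
    by simp
qed

lemma fiber_dvd:
  fixes Q :: "('g \<Rightarrow> 'a::finite) set"
  assumes fin: "finite Q" and sub: "Q \<subseteq> patterns S" and sS: "s \<in> S"
    and cl: "\<And>z a. z \<in> Q \<Longrightarrow> z(s:=a) \<in> Q"
  shows "card (UNIV::'a set) dvd card Q"
proof -
  define I where "I = (\<lambda>z. z(s:=undefined)) ` Q"
  define F where "F = (\<lambda>w. (\<lambda>a. w(s:=a)) ` (UNIV::'a set))"
  have QU: "Q = (\<Union>w\<in>I. F w)"
  proof
    show "Q \<subseteq> (\<Union>w\<in>I. F w)"
    proof
      fix z assume z: "z \<in> Q"
      have "z = (z(s:=undefined))(s := z s)" by simp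
      then show "z \<in> (\<Union>w\<in>I. F w)" using z unfolding I_def F_def by blast
    qed
    show "(\<Union>w\<in>I. F w) \<subseteq> Q" unfolding I_def F_def using cl by auto
  qed
  have finI: "finite I" using fin unfolding I_def by simp
  have cardF: "card (F w) = card (UNIV::'a set)" for w
    unfolding F_def by (rule card_image) (auto simp: inj_on_def dest: fun_cong[where x=s])
  have disj: "\<forall>i\<in>I. \<forall>j\<in>I. i \<noteq> j \<longrightarrow> F i \<inter> F j = {}"
  proof (intro ballI impI)
    fix i j assume i: "i \<in> I" and j: "j \<in> I" and ne: "i \<noteq> j"
    have "i s = undefined" "j s = undefined" using i j unfolding I_def by auto
    show "F i \<inter> F j = {}"
    proof (rule ccontr)
      assume "F i \<inter> F j \<noteq> {}"
      then obtain a b where "i(s:=a) = j(s:=b)" unfolding F_def by auto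
      then have "(i(s:=a))(s:=undefined) = (j(s:=b))(s:=undefined)" by simp
      then have "i = j" using \<open>i s = undefined\<close> \<open>j s = undefined\<close>
        by (metis fun_upd_triv fun_upd_upd)
      then show False using ne by simp
    qed
  qed
  have "card Q = (\<Sum>w\<in>I. card (F w))"
    unfolding QU by (rule card_UN_disjoint[OF finI _ disj]) (auto simp: F_def)
  also have "\<dots> = card I * card (UNIV::'a set)" using cardF by simp
  finally show ?thesis by simp
qed

theorem mainTheorem9:
  fixes S :: "'g::group_add set"
    and P :: "('g \<Rightarrow> 'a::finite) set"
    and f mu :: "('g \<Rightarrow> 'a) \<Rightarrow> 'a"
  assumes "card (UNIV :: 'a set) \<ge> 2"
    and "finite S" and "0 \<in> S" and "card S \<ge> 2"
    and "generates S P f mu"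
    and "\<not> card (UNIV :: 'a set) dvd card P"
  shows "mms S mu = S"
proof -
  have Pdef: "P = {z \<in> patterns S. mu z \<noteq> z 0}" using assms(5) by (simp add: generates_def)
  have finpat: "finite (patterns S' :: ('g \<Rightarrow> 'a) set)" if "finite S'" for S' :: "'g set"
    unfolding patterns_PiE using that by (intro finite_PiE) auto
  have Smem: "memory_set (ca S mu) S" using assms(2) by (auto simp: memory_set_def)
  have allT: "S \<subseteq> T" if T: "memory_set (ca S mu) T" for T
  proof
    fix s assume sS: "s \<in> S"
    show "s \<in> T"
    proof (rule ccontr)
      assume sT: "s \<notin> T"
      obtain nu where eq: "ca S mu = ca T nu" using T by (auto simp: memory_set_def)
      have inv: "\<And>z a. z \<in> patterns S \<Longrightarrow> mu (z(s:=a)) = mu z"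
        using invariance[OF eq sT sS] by blast
      show False
      proof (cases "s = 0")
        case False
        have "card (UNIV::'a set) dvd card P"
        proof (rule fiber_dvd[OF _ _ sS])
          show "finite P" using finpat[OF assms(2)] Pdef by simp
          show "P \<subseteq> patterns S" using Pdef by auto
          fix z a assume "z \<in> P"
          then show "z(s:=a) \<in> P" using Pdef inv False sS
            by (auto simp: patterns_def)
        qed
        then show False using assms(6) by simp
      next
        case True
        define N where "N = {z \<in> patterns S. mu z = z 0}"
        define W where "W = (patterns (S - {0}) :: ('g \<Rightarrow> 'a) set)"
        obtain t where t: "t \<in> S" "t \<noteq> 0"
        proof -
          have "\<not> S \<subseteq> {0}"
          proof
            assume "S \<subseteq> {0}"
            then have "card S \<le> card {0::'g}" by (rule card_mono[rotated]) simp
            then show False using assms(4) by simp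
          qed
          then show ?thesis using that by blast
        qed
        have WS: "W \<subseteq> patterns S" unfolding W_def patterns_def by auto
        have dW: "card (UNIV::'a set) dvd card W"
        proof (rule fiber_dvd[of W "S - {0}" t])
          show "finite W" unfolding W_def using finpat assms(2) by simp
        qed (use t in \<open>auto simp: W_def patterns_def\<close>)
        define g where "g = (\<lambda>w::'g \<Rightarrow> 'a. w(0 := mu w))"
        have NW: "N = g ` W"
        proof
          show "N \<subseteq> g ` W"
          proof
            fix z assume z: "z \<in> N"
            let ?w = "z(0:=undefined)"
            have wW: "?w \<in> W" using z unfolding N_def W_def patterns_def by auto
            have "mu ?w = mu z" using inv[of z undefined] z True unfolding N_def by auto
            then have "g ?w = z" using z unfolding g_def N_def by auto
            then show "z \<in> g ` W" using wW by (metis image_eqI)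
          qed
          show "g ` W \<subseteq> N"
          proof
            fix y assume "y \<in> g ` W"
            then obtain w where w: "w \<in> W" "y = g w" by blast
            have wS: "w \<in> patterns S" using w WS by auto
            have yS: "y \<in> patterns S" using w(2) wS assms(3)
              unfolding g_def patterns_def by auto
            have "mu y = mu w" using w(2) inv[OF wS, of "mu w"] True unfolding g_def by simp
            then show "y \<in> N" using yS w(2) unfolding N_def g_def by simp
          qed
        qed
        have injg: "inj_on g W"
        proof
          fix x y assume x: "x \<in> W" and y: "y \<in> W" and e: "g x = g y"
          have "x 0 = undefined" "y 0 = undefined" using x y unfolding W_def patterns_def by auto
          then show "x = y" using e unfolding g_def
            by (metis fun_upd_triv fun_upd_upd)
        qed
        have cN: "card N = card W" unfolding NW using injg by (rule card_image)
        have dPat: "card (UNIV::'a set) dvd card (patterns S :: ('g \<Rightarrow> 'a) set)"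
          by (rule fiber_dvd[OF finpat[OF assms(2)] _ assms(3)]) (auto simp: patterns_def assms(3))
        have split: "patterns S = P \<union> N" "P \<inter> N = {}" unfolding Pdef N_def by auto
        have "card (patterns S :: ('g \<Rightarrow> 'a) set) = card P + card N"
          using split finpat[OF assms(2)] by (simp add: card_Un_disjoint)
        then have "card P = card (patterns S :: ('g \<Rightarrow> 'a) set) - card N" by simp
        then have "card (UNIV::'a set) dvd card P" using dPat dW cN by (simp add: dvd_diff_nat)
        then show False using assms(6) by simp
      qed
    qed
  qed
  show ?thesis
  proof
    show "mms S mu \<subseteq> S" unfolding mms_def using Smem by blast
    show "S \<subseteq> mms S mu" unfolding mms_def using allT by blast
  qed
qed

end
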